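(* Let $\alpha\in(0,\tfrac12]$, $X_A,X_B>0$, and suppose the solution function $S$ has exactly three zeros $\sigma_1^*<\sigma_2^*<\sigma_3^*$ in $(0,\infty)$. If either $\sqrt{\frac{8\alpha}{1-\alpha}}-\frac{2\alpha}{1-\alpha}\le\frac{X_B}{X_A}\le1$, or $\frac{X_B}{X_A}>1$, then there exists a pre-commitment $p\in[0,X_B]$ by player $B$ to battlefield $b=1$ such that $u_B(p)>\pi_B(\sigma_2^* )$.
   Context: Two-battlefield asymmetric setting: valuations $v_{A,1}=\alpha$, $v_{A,2}=1-\alpha$, $v_{B,1}=1-\alpha$, $v_{B,2}=\alpha$, budgets $X_A,X_B>0$. Define, for $x,y\ge0$, $L(x,y)=\frac{x}{2y}$ if $0\le x\le y$, $y>0$; $L(x,y)=1-\frac{y}{2x}$ if $x>y\ge0$; $L(0,0)=\tfrac12$. Let $c=\frac{(1-\alpha)^2}{\alpha}+\frac{\alpha^2}{1-\alpha}$, $r=X_A/X_B$, and $S:(0,\infty)\to\mathbb R$: $S(\sigma)=\sigma^2(c\sigma-r)$ on $(0,\frac{\alpha}{1-\alpha})$; $S(\sigma)=\frac{\alpha^2}{1-\alpha}(\sigma^3-r)+\alpha\sigma(1-r\sigma)$ on $[\frac{\alpha}{1-\alpha},\frac{1-\alpha}{\alpha})$; $S(\sigma)=\sigma-rc$ on $[\frac{1-\alpha}{\alpha},\infty)$. Player $B$'s equilibrium payoff for a zero $\sigma$: $\pi_B(\sigma)=1-\frac{\sigma}{2}$ if $\sigma\in(0,\frac{\alpha}{1-\alpha})$;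 $\pi_B(\sigma)=1-\alpha-\frac{\alpha\sigma}{2}+\frac{\alpha^2}{2\sigma(1-\alpha)}$ if $\sigma\in[\frac{\alpha}{1-\alpha},\frac{1-\alpha}{\alpha})$; $\pi_B(\sigma)=\frac{c}{2\sigma}$ if $\sigma\ge\frac{1-\alpha}{\alpha}$. Pre-commitment: $B$ places $p\in[0,X_B]$ on one battlefield $b\in\{1,2\}$; $u_A^{M}(p)=v_{A,b}+(1-v_{A,b})L(X_A-p,X_B-p)$ (for $p\le X_A$), $u_A^{W}(p)=(1-v_{A,b})L(X_A,X_B-p)$; $A$'s response is $\mathtt A_b(p)=\mathtt M$ if $p\le X_A$ and $u_A^M(p)>u_A^W(p)$, else $\mathtt A_b(p)=\mathtt W$ (ties go to withdrawing). $B$'s payoff is $u_B(p)=(1-v_{B,b})L(X_B-p,X_A-p)$ if $\mathtt A_b(p)=\mathtt M$ and $u_B(p)=v_{B,b}+(1-v_{B,b})L(X_B-p,X_A)$ if $\mathtt A_b(p)=\mathtt W$. *)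

theory Defs
  imports Complex_Main
begin

definition L :: "real \<Rightarrow> real \<Rightarrow> real" where
  "L x y = (if x = 0 \<and> y = 0 then 1/2
            else if x \<le> y then x / (2 * y)
            else 1 - y / (2 * x))"

definition vA :: "real \<Rightarrow> nat \<Rightarrow> real" where
  "vA \<alpha> b = (if b = 1 then \<alpha> else 1 - \<alpha>)"

definition vB :: "real \<Rightarrow> nat \<Rightarrow> real" where
  "vB \<alpha> b = (if b = 1 then 1 - \<alpha> else \<alpha>)"

definition cc :: "real \<Rightarrow> real" where
  "cc \<alpha> = (1 - \<alpha>)^2 / \<alpha> + \<alpha>^2 / (1 - \<alpha>)"

definition S :: "real \<Rightarrow> real \<Rightarrow> real \<Rightarrow> real \<Rightarrow> real" where
  "S \<alpha> XA XB \<sigma> =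
     (let r = XA / XB; c = cc \<alpha> in
      if \<sigma> < \<alpha> / (1 - \<alpha>) then \<sigma>^2 * (c * \<sigma> - r)
      else if \<sigma> < (1 - \<alpha>) / \<alpha> then
        \<alpha>^2 / (1 - \<alpha>) * (\<sigma>^3 - r) + \<alpha> * \<sigma> * (1 - r * \<sigma>)
      else \<sigma> - r * c)"

text \<open>Player B's equilibrium payoff associated with a zero sigma of S.\<close>
definition piB :: "real \<Rightarrow> real \<Rightarrow> real" where
  "piB \<alpha> \<sigma> =
     (if \<sigma> < \<alpha> / (1 - \<alpha>) then 1 - \<sigma> / 2
      else if \<sigma> < (1 - \<alpha>) / \<alpha> then
        1 - \<alpha> - \<alpha> * \<sigma> / 2 + \<alpha>^2 / (2 * \<sigma> * (1 - \<alpha>))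
      else cc \<alpha> / (2 * \<sigma>))"

text \<open>Pre-commitment of p units by B on battlefield b.\<close>
definition uAM :: "real \<Rightarrow> real \<Rightarrow> real \<Rightarrow> nat \<Rightarrow> real \<Rightarrow> real" where
  "uAM \<alpha> XA XB b p = vA \<alpha> b + (1 - vA \<alpha> b) * L (XA - p) (XB - p)"

definition uAW :: "real \<Rightarrow> real \<Rightarrow> real \<Rightarrow> nat \<Rightarrow> real \<Rightarrow> real" where
  "uAW \<alpha> XA XB b p = (1 - vA \<alpha> b) * L XA (XB - p)"

text \<open>A's response: True = match (M), False = withdraw (W); ties go to withdrawing.\<close>
definition A_matches :: "real \<Rightarrow> real \<Rightarrow> real \<Rightarrow> nat \<Rightarrow> real \<Rightarrow> bool" where
  "A_matches \<alpha> XA XB b p \<longleftrightarrow> p \<le> XA \<and> uAM \<alpha> XA XB b p > uAW \<alpha> XA XB b p"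

definition uB :: "real \<Rightarrow> real \<Rightarrow> real \<Rightarrow> nat \<Rightarrow> real \<Rightarrow> real" where
  "uB \<alpha> XA XB b p =
     (if A_matches \<alpha> XA XB b p then (1 - vB \<alpha> b) * L (XB - p) (XA - p)
      else vB \<alpha> b + (1 - vB \<alpha> b) * L (XB - p) XA)"

end

theory Submission
  imports Defs
begin

definition hh :: "real \<Rightarrow> real \<Rightarrow> real" where
  "hh a s = s * (a * s^2 + 1) / (s^2 + a)"

lemma hh_strict:
  fixes a s t :: real
  assumes "0 < a" "0 < s" "s < t"
    and "s * t \<le> a \<or> s * t \<ge> 1 / a \<or> a \<ge> 1/3"
  shows "hh a s < hh a t"
proof -
  define P where "P = s * t"
  have P0: "P > 0" using assms unfolding P_def by simp
  have E: "a * P^2 + a^2 * (s^2 + s*t + t^2) - P + a > 0"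
  proof -
    have "(s-t)^2 > 0" using assms(3) by simp
    then have sq: "s^2 + t^2 > 2 * P" unfolding P_def by (simp add: power2_eq_square algebra_simps)
    have st2: "s^2 + s*t + t^2 > 3 * P" using sq unfolding P_def by simp
    have A1: "a^2 * (s^2 + s*t + t^2) > a^2 * (3 * P)" using st2 assms(1) by (simp add: mult_strict_left_mono)
    have A2: "a * P^2 + 3 * a^2 * P - P + a \<ge> 0"
    proof -
      consider "P \<le> a" | "P \<ge> 1/a" | "a \<ge> 1/3" using assms(4) unfolding P_def by blast
      then show ?thesis
      proof cases
        case 1
        have "a * P^2 > 0" "3 * a^2 * P > 0" using P0 assms(1) by simp_all
        then show ?thesis using 1 by linarith
      next
        case 2
        then have "a * P \<ge> 1" using assms(1) by (simp add: field_simps)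
        then have "P * (a * P - 1) \<ge> 0" using P0 by simp
        then have "a * P^2 - P \<ge> 0" by (simp add: power2_eq_square algebra_simps)
        moreover have "3 * a^2 * P > 0" using P0 assms(1) by simp
        ultimately show ?thesis using assms(1) by linarith
      next
        case 3
        have "a * P^2 + 3 * a^2 * P - P + a = a * (P - 1)^2 + (3*a - 1) * (a + 1) * P"
          by (simp add: algebra_simps power2_eq_square)
        moreover have "(3*a - 1) * (a + 1) * P \<ge> 0" using 3 P0 assms(1) by simp
        moreover have "a * (P - 1)^2 \<ge> 0" using assms(1) by simp
        ultimately show ?thesis by linarith
      qed
    qed
    from A1 A2 show ?thesis by linarith
  qed
  have id: "t * (a * t^2 + 1) * (s^2 + a) - s * (a * s^2 + 1) * (t^2 + a)
      = (t - s) * (a * P^2 + a^2 * (s^2 + s*t + t^2) - P + a)"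
    unfolding P_def by (simp add: algebra_simps power2_eq_square)
  have "(t - s) * (a * P^2 + a^2 * (s^2 + s*t + t^2) - P + a) > 0"
    using E assms(3) by simp
  then have "s * (a * s^2 + 1) * (t^2 + a) < t * (a * t^2 + 1) * (s^2 + a)"
    using id by linarith
  moreover have "s^2 + a > 0" "t^2 + a > 0" using assms by (auto intro: add_nonneg_pos)
  ultimately show ?thesis unfolding hh_def by (simp add: divide_simps)
qed

definition Hf :: "real \<Rightarrow> real \<Rightarrow> real" where
  "Hf a s = (if s < a then (a^2 - a + 1) / a * s
             else if s < 1 / a then hh a s else a * s / (a^2 - a + 1))"

lemma k_pos: "(a::real)^2 - a + 1 > 0"
proof -
  have "(a - 1/2)^2 \<ge> 0" by simp
  then show ?thesis by (simp add: power2_eq_square algebra_simps)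
qed

lemma hh_a: "0 < (a::real) \<Longrightarrow> hh a a = a^2 - a + 1"
proof -
  assume a: "0 < a"
  have "a^2 + a > 0" using a by (simp add: add_pos_pos)
  moreover have "a * (a * a^2 + 1) = (a^2 - a + 1) * (a^2 + a)" by (simp add: algebra_simps power2_eq_square)
  ultimately show ?thesis unfolding hh_def by (simp add: divide_simps)
qed

lemma hh_inv: "0 < (a::real) \<Longrightarrow> hh a (1/a) = 1 / (a^2 - a + 1)"
proof -
  assume a: "0 < a"
  have k: "a^2 - a + 1 > 0" by (rule k_pos)
  have "hh a (1/a) = (1/a) * (1/a + 1) / (1/a^2 + a)" unfolding hh_def
    by (simp add: power_divide power2_eq_square)
  also have "\<dots> = (1 + a) / (1 + a^3)"
  proof -
    have n: "(1/a)*(1/a+1) = (1+a)/a^2" using a by (simp add: field_simps power2_eq_square)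
    have d: "1/a^2 + a = (1+a^3)/a^2" using a by (simp add: field_simps power2_eq_square power3_eq_cube)
    show ?thesis unfolding n d using a by simp
  qed
  also have "1 + a^3 = (1 + a) * (a^2 - a + 1)" by (simp add: algebra_simps power2_eq_square power3_eq_cube)
  also have "(1 + a) / ((1 + a) * (a^2 - a + 1)) = 1 / (a^2 - a + 1)" using a by simp
  finally show ?thesis .
qed

lemma hh_le:
  fixes a s t :: real
  assumes "0 < a" "0 < s" "s \<le> t"
    and "s * t \<le> a \<or> s * t \<ge> 1 / a \<or> a \<ge> 1/3"
  shows "hh a s \<le> hh a t"
  using hh_strict[OF assms(1,2) _ assms(4)] assms(3) by (cases "s = t") auto

lemma Hf_mono:
  fixes a s t :: real
  assumes a0: "0 < a" and a1: "a \<le> 1" and s0: "0 < s" and st: "s < t"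
    and cond: "t^2 \<le> a \<or> s^2 \<ge> 1 / a \<or> a \<ge> 1/3"
  shows "Hf a s < Hf a t"
proof -
  define k where "k = a^2 - a + 1"
  have k0: "k > 0" unfolding k_def by (rule k_pos)
  have k1: "k \<le> 1" unfolding k_def using a0 a1 by (simp add: power2_eq_square mult_le_cancel_right1)
  have ia: "1 / a \<ge> 1" using a0 a1 by simp
  have aia: "a \<le> 1 / a" using a1 ia by linarith
  have t0: "t > 0" using s0 st by linarith
  have R1: "Hf a x = k / a * x" if "x < a" for x using that unfolding Hf_def k_def by simp
  have R2: "Hf a x = hh a x" if "a \<le> x" "x < 1/a" for x using that unfolding Hf_def by simp
  have R3: "Hf a x = a * x / k" if "1/a \<le> x" for x using that aia unfolding Hf_def k_def by simp
  have bound1: "k / a * x < k" if "x < a" for x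
  proof -
    have "k * x < k * a" using that k0 by (simp add: mult_strict_left_mono)
    then show ?thesis using a0 by (simp add: pos_divide_less_eq mult.commute)
  qed
  have bound3: "a * x / k \<ge> 1 / k" if "1/a \<le> x" for x
  proof -
    have "a * x \<ge> 1" using that a0 by (simp add: field_simps)
    then show ?thesis using k0 by (simp add: divide_right_mono)
  qed
  have kk: "k \<le> 1 / k" using k0 k1 by (simp add: field_simps power2_eq_square mult_le_one)
  have t2: "t^2 \<le> a \<Longrightarrow> t \<le> 1"
  proof -
    assume "t^2 \<le> a"
    then have "t^2 \<le> 1" using a1 by simp
    show "t \<le> 1"
    proof (rule ccontr)
      assume "\<not> t \<le> 1"
      then have "1 * 1 < t * t" by (intro mult_strict_mono) auto
      then show False using \<open>t^2 \<le> 1\<close> by (simp add: power2_eq_square)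
    qed
  qed
  have s2: "s^2 \<ge> 1 / a \<Longrightarrow> s \<ge> 1"
  proof -
    assume "s^2 \<ge> 1/a"
    then have "s^2 \<ge> 1" using ia by simp
    show "s \<ge> 1"
    proof (rule ccontr)
      assume "\<not> s \<ge> 1"
      then have "s * s < 1 * 1" using s0 by (intro mult_strict_mono) auto
      then show False using \<open>s^2 \<ge> 1\<close> by (simp add: power2_eq_square)
    qed
  qed
  show ?thesis
  proof (cases "t < a")
    case True
    then have "s < a" using st by simp
    have "k * s < k * t" using st k0 by simp
    then have "k * s / a < k * t / a" using a0 by (simp add: divide_strict_right_mono)
    then show ?thesis using R1 True \<open>s < a\<close> by simp
  next
    case tA: False
    show ?thesis
    proof (cases "t < 1/a")
      case tB: True
      have Ht: "Hf a t = hh a t" using R2 tA tB by simp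
      show ?thesis
      proof (cases "s < a")
        case True
        have c2: "a * t \<le> a \<or> a * t \<ge> 1 / a \<or> a \<ge> 1/3"
        proof -
          consider "t^2 \<le> a" | "s^2 \<ge> 1/a" | "a \<ge> 1/3" using cond by blast
          then show ?thesis
          proof cases
            case 1 then have "t \<le> 1" by (rule t2)
            then show ?thesis using a0 by simp
          next
            case 2 then have "s \<ge> 1" by (rule s2)
            then show ?thesis using True a1 by simp
          qed simp
        qed
        have "hh a a \<le> hh a t" using hh_le[OF a0 a0 _ c2] tA by simp
        then show ?thesis using Ht R1[OF True] bound1[OF True] hh_a[OF a0] k_def by simp
      next
        case False
        have c2: "s * t \<le> a \<or> s * t \<ge> 1 / a \<or> a \<ge> 1/3"
        proof -
          consider "t^2 \<le> a" | "s^2 \<ge> 1/a" | "a \<ge> 1/3" using cond by blast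
          then show ?thesis
          proof cases
            case 1
            have "s * t \<le> t * t" using st s0 by (simp add: mult_right_mono)
            then show ?thesis using 1 by (simp add: power2_eq_square)
          next
            case 2
            have "s * s \<le> s * t" using st s0 by (simp add: mult_left_mono)
            then show ?thesis using 2 by (simp add: power2_eq_square)
          qed simp
        qed
        have "hh a s < hh a t" using hh_strict[OF a0 s0 st c2] .
        then show ?thesis using Ht R2[of s] False st tB by simp
      qed
    next
      case tB: False
      have Ht: "Hf a t = a * t / k" using R3 tB by simp
      have Ht1: "Hf a t \<ge> 1 / k" using Ht bound3 tB by simp
      show ?thesis
      proof (cases "s < a")
        case True
        then show ?thesis using R1[OF True] bound1[OF True] kk Ht1 by simp
      next
        case sA: False
        show ?thesis
        proof (cases "s < 1/a")
          case True
          have c2: "s * (1/a) \<le> a \<or> s * (1/a) \<ge> 1 / a \<or> a \<ge> 1/3"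
          proof -
            consider "t^2 \<le> a" | "s^2 \<ge> 1/a" | "a \<ge> 1/3" using cond by blast
            then show ?thesis
            proof cases
              case 1 then have "t \<le> 1" by (rule t2)
              then have "1/a \<le> 1" using tB by linarith
              then have "a \<ge> 1" using a0 by (simp add: field_simps)
              then have False using sA st \<open>t \<le> 1\<close> by linarith
              then show ?thesis ..
            next
              case 2 then have "s \<ge> 1" by (rule s2)
              then show ?thesis using a0 by (simp add: divide_right_mono)
            qed simp
          qed
          have "hh a s < hh a (1/a)" using hh_strict[OF a0 s0 True c2] .
          then have "Hf a s < 1 / k" using R2[of s] sA True hh_inv[OF a0] k_def by simp
          then show ?thesis using Ht1 by simp
        next
          case False
          then show ?thesis using R3 Ht st a0 k0 by (simp add: divide_strict_right_mono)
        qed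
      qed
    qed
  qed
qed

lemma cc_eq:
  fixes \<alpha> :: real
  assumes "0 < \<alpha>" "\<alpha> < 1"
  shows "cc \<alpha> = ((\<alpha>/(1-\<alpha>))^2 - \<alpha>/(1-\<alpha>) + 1) / (\<alpha>/(1-\<alpha>))"
proof -
  have b: "1 - \<alpha> > 0" using assms by simp
  have "cc \<alpha> = ((1-\<alpha>)^3 + \<alpha>^3) / (\<alpha> * (1-\<alpha>))"
    unfolding cc_def using assms b by (simp add: field_simps power2_eq_square power3_eq_cube)
  also have "\<dots> = (\<alpha>^2 - \<alpha>*(1-\<alpha>) + (1-\<alpha>)^2) / (\<alpha> * (1-\<alpha>))"
    by (simp add: algebra_simps power2_eq_square power3_eq_cube)
  also have "\<dots> = ((\<alpha>/(1-\<alpha>))^2 - \<alpha>/(1-\<alpha>) + 1) / (\<alpha>/(1-\<alpha>))"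
  proof -
    have n: "(\<alpha>/(1-\<alpha>))^2 - \<alpha>/(1-\<alpha>) + 1 = (\<alpha>^2 - \<alpha>*(1-\<alpha>) + (1-\<alpha>)^2) / (1-\<alpha>)^2"
      using b by (simp add: power_divide add_divide_distrib diff_divide_distrib power2_eq_square)
    show ?thesis unfolding n using b assms(1) by (simp add: power2_eq_square)
  qed
  finally show ?thesis .
qed

lemma S_zero_iff:
  fixes \<alpha> XA XB \<sigma> :: real
  assumes "0 < \<alpha>" "\<alpha> < 1" "0 < XA" "0 < XB" "0 < \<sigma>"
  shows "S \<alpha> XA XB \<sigma> = 0 \<longleftrightarrow> XA / XB = Hf (\<alpha>/(1-\<alpha>)) \<sigma>"
proof -
  define a where "a = \<alpha>/(1-\<alpha>)"
  define r where "r = XA / XB"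
  have b: "1 - \<alpha> > 0" using assms by simp
  have a0: "a > 0" unfolding a_def using assms b by simp
  have ia: "(1-\<alpha>)/\<alpha> = 1/a" unfolding a_def by simp
  have c: "cc \<alpha> = (a^2 - a + 1)/a" unfolding a_def using cc_eq[OF assms(1,2)] .
  have k: "a^2 - a + 1 > 0" by (rule k_pos)
  have c0: "cc \<alpha> > 0" using c k a0 by simp
  have Sdef: "S \<alpha> XA XB \<sigma> = (if \<sigma> < a then \<sigma>^2 * (cc \<alpha> * \<sigma> - r)
      else if \<sigma> < 1/a then \<alpha>^2 / (1 - \<alpha>) * (\<sigma>^3 - r) + \<alpha> * \<sigma> * (1 - r * \<sigma>)
      else \<sigma> - r * cc \<alpha>)"
    unfolding S_def Let_def r_def a_def[symmetric] ia by simp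
  show ?thesis
  proof (cases "\<sigma> < a")
    case True
    have "S \<alpha> XA XB \<sigma> = 0 \<longleftrightarrow> cc \<alpha> * \<sigma> - r = 0" using Sdef True assms(5) by simp
    also have "\<dots> \<longleftrightarrow> r = (a^2 - a + 1)/a * \<sigma>" using c by auto
    finally show ?thesis using True unfolding Hf_def a_def[symmetric] r_def by simp
  next
    case F1: False
    show ?thesis
    proof (cases "\<sigma> < 1/a")
      case True
      have e: "\<alpha>^2 / (1 - \<alpha>) * (\<sigma>^3 - r) + \<alpha> * \<sigma> * (1 - r * \<sigma>)
          = \<alpha> * (\<sigma> * (a * \<sigma>^2 + 1) - r * (\<sigma>^2 + a))"
      proof -
        have "\<alpha>^2 / (1-\<alpha>) = \<alpha> * a" unfolding a_def by (simp add: power2_eq_square)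
        then show ?thesis by (simp add: algebra_simps power2_eq_square power3_eq_cube)
      qed
      have p: "\<sigma>^2 + a > 0" using a0 by (simp add: add_nonneg_pos)
      have "S \<alpha> XA XB \<sigma> = 0 \<longleftrightarrow> \<sigma> * (a * \<sigma>^2 + 1) - r * (\<sigma>^2 + a) = 0"
        using Sdef F1 True e assms(1) by simp
      also have "\<dots> \<longleftrightarrow> r = hh a \<sigma>" using p unfolding hh_def by (auto simp: field_simps)
      finally show ?thesis using True F1 unfolding Hf_def a_def[symmetric] r_def by simp
    next
      case False
      have "S \<alpha> XA XB \<sigma> = 0 \<longleftrightarrow> \<sigma> = r * cc \<alpha>" using Sdef F1 False by simp
      also have "\<dots> \<longleftrightarrow> r = a * \<sigma> / (a^2 - a + 1)"
      proof -
        define kk where "kk = a^2 - a + 1"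
        have kk0: "kk > 0" using k kk_def by simp
        have "\<sigma> = r * (kk / a) \<longleftrightarrow> r = a * \<sigma> / kk" using kk0 a0 by (auto simp: field_simps)
        then show ?thesis unfolding c kk_def by simp
      qed
      finally show ?thesis using False F1 unfolding Hf_def a_def[symmetric] r_def by simp
    qed
  qed
qed

lemma withdraw_payoff:
  fixes \<alpha> XA XB p :: real
  assumes "0 < \<alpha>" "0 < XA" "p \<le> XB" "\<not> A_matches \<alpha> XA XB 1 p"
  shows "uB \<alpha> XA XB 1 p \<ge> 1 - \<alpha>"
proof -
  have L0: "L (XB - p) XA \<ge> 0" using assms(2,3) unfolding L_def by (auto simp: field_simps)
  have "uB \<alpha> XA XB 1 p = (1 - \<alpha>) + \<alpha> * L (XB - p) XA"
    using assms(4) unfolding uB_def vB_def by simp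
  then show ?thesis using L0 assms(1) by simp
qed

theorem theorem2:
  fixes \<alpha> XA XB \<sigma>1 \<sigma>2 \<sigma>3 :: real
  assumes "0 < \<alpha>" and "\<alpha> \<le> 1/2"
    and "0 < XA" and "0 < XB"
    and "\<sigma>1 < \<sigma>2" and "\<sigma>2 < \<sigma>3"
    and "{\<sigma>. 0 < \<sigma> \<and> S \<alpha> XA XB \<sigma> = 0} = {\<sigma>1, \<sigma>2, \<sigma>3}"
    and "(sqrt (8 * \<alpha> / (1 - \<alpha>)) - 2 * \<alpha> / (1 - \<alpha>) \<le> XB / XA \<and> XB / XA \<le> 1)
         \<or> XB / XA > 1"
  shows "\<exists>p\<in>{0..XB}. uB \<alpha> XA XB 1 p > piB \<alpha> \<sigma>2"
proof -
  note A = assms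
  have al1: "\<alpha> < 1" using A(2) by simp
  have b: "1 - \<alpha> > 0" using al1 by simp
  define a where "a = \<alpha>/(1-\<alpha>)"
  have a0: "a > 0" unfolding a_def using A(1) b by simp
  have a1: "a \<le> 1" unfolding a_def using A(2) b by simp
  have ia: "(1-\<alpha>)/\<alpha> = 1/a" unfolding a_def by simp
  have mem: "0 < \<sigma> \<and> S \<alpha> XA XB \<sigma> = 0" if "\<sigma> \<in> {\<sigma>1, \<sigma>2, \<sigma>3}" for \<sigma>
    using that A(7) by blast
  have z: "0 < \<sigma> \<and> XA / XB = Hf a \<sigma>" if "\<sigma> \<in> {\<sigma>1, \<sigma>2, \<sigma>3}" for \<sigma>
    using mem[OF that] S_zero_iff[OF A(1) al1 A(3) A(4)] unfolding a_def by blast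
  have z1: "0 < \<sigma>1" "XA / XB = Hf a \<sigma>1" using z[of \<sigma>1] by auto
  have z2: "0 < \<sigma>2" "XA / XB = Hf a \<sigma>2" using z[of \<sigma>2] by auto
  have z3: "0 < \<sigma>3" "XA / XB = Hf a \<sigma>3" using z[of \<sigma>3] by auto
  have a3: "a < 1/3"
  proof (rule ccontr)
    assume "\<not> a < 1/3"
    then have "Hf a \<sigma>1 < Hf a \<sigma>2" using Hf_mono[OF a0 a1 z1(1) A(5)] by simp
    then show False using z1 z2 by simp
  qed
  have s2a: "\<sigma>2^2 > a"
  proof (rule ccontr)
    assume "\<not> \<sigma>2^2 > a"
    then have "Hf a \<sigma>1 < Hf a \<sigma>2" using Hf_mono[OF a0 a1 z1(1) A(5)] by simp
    then show False using z1 z2 by simp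
  qed
  have s2b: "\<sigma>2^2 < 1/a"
  proof (rule ccontr)
    assume "\<not> \<sigma>2^2 < 1/a"
    then have "Hf a \<sigma>2 < Hf a \<sigma>3" using Hf_mono[OF a0 a1 z2(1) A(6)] by simp
    then show False using z2 z3 by simp
  qed
  have r1: "a \<le> \<sigma>2"
  proof (rule ccontr)
    assume "\<not> a \<le> \<sigma>2"
    then have "\<sigma>2 * \<sigma>2 \<le> a * a" using z2(1) by (intro mult_mono) auto
    moreover have "a * a \<le> a" using a0 a1 by (simp add: mult_le_cancel_left1)
    ultimately show False using s2a by (simp add: power2_eq_square)
  qed
  have r2: "\<sigma>2 < 1/a"
  proof (rule ccontr)
    assume "\<not> \<sigma>2 < 1/a"
    then have "(1/a) * (1/a) \<le> \<sigma>2 * \<sigma>2" using a0 z2(1) by (intro mult_mono) auto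
    moreover have "1/a \<le> (1/a) * (1/a)" using a0 a1 by (simp add: field_simps)
    ultimately show False using s2b by (simp add: power2_eq_square)
  qed
  have piB2: "piB \<alpha> \<sigma>2 < 1 - \<alpha>"
  proof -
    have "\<not> \<sigma>2 < \<alpha>/(1-\<alpha>)" using r1 unfolding a_def by simp
    have "\<sigma>2 < (1-\<alpha>)/\<alpha>" using r2 ia by simp
    note nn = this \<open>\<not> \<sigma>2 < \<alpha>/(1-\<alpha>)\<close>
    have e: "piB \<alpha> \<sigma>2 = 1 - \<alpha> - \<alpha> * \<sigma>2 / 2 + \<alpha>^2 / (2 * \<sigma>2 * (1 - \<alpha>))"
      unfolding piB_def using nn by simp
    have e2: "\<alpha>^2 / (2 * \<sigma>2 * (1 - \<alpha>)) = \<alpha> * a / (2 * \<sigma>2)"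
      unfolding a_def by (simp add: power2_eq_square)
    have "a < \<sigma>2 * \<sigma>2" using s2a by (simp add: power2_eq_square)
    then have "a / \<sigma>2 < \<sigma>2" using z2(1) by (simp add: pos_divide_less_eq)
    then have "\<alpha> * (a / \<sigma>2) < \<alpha> * \<sigma>2" using A(1) by (rule mult_strict_left_mono)
    moreover have "\<alpha> * a / (2 * \<sigma>2) = (\<alpha> * (a / \<sigma>2)) / 2" by simp
    ultimately have "\<alpha> * a / (2 * \<sigma>2) < \<alpha> * \<sigma>2 / 2" by simp
    then show ?thesis using e e2 by simp
  qed
  have ex: "\<exists>p\<in>{0..XB}. \<not> A_matches \<alpha> XA XB 1 p"
  proof (cases "XB / XA > 1")
    case True
    then have "XB > XA" using A(3) by (simp add: field_simps)
    then show ?thesis unfolding A_matches_def using A(4) by (intro bexI[of _ XB]) auto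
  next
    case False
    define x where "x = XA"
    define y where "y = XB"
    have x0: "x > 0" and y0: "y > 0" using A(3,4) x_def y_def by auto
    have hyp: "sqrt (8 * a) - 2 * a \<le> y / x" "y \<le> x"
      using A(8) False A(3) unfolding a_def x_def y_def by (auto simp: field_simps)
    have sq1: "sqrt (8 * a) * x \<le> y + 2 * a * x"
      using hyp(1) x0 by (simp add: field_simps)
    have sq2: "8 * a * x^2 \<le> (y + 2 * a * x)^2"
    proof -
      have "(sqrt (8 * a) * x)^2 \<le> (y + 2 * a * x)^2"
        using sq1 x0 a0 by (intro power_mono) auto
      then show ?thesis using a0 by (simp add: power_mult_distrib)
    qed
    have s4: "4 * a < sqrt (8 * a)"
    proof -
      have "(4*a)^2 < 8 * a" using a0 a3 by (simp add: power2_eq_square)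
      then show ?thesis by (rule real_less_rsqrt)
    qed
    have y2a: "2 * a * x < y"
    proof -
      have "4 * a * x < sqrt (8 * a) * x" using s4 x0 by simp
      then show ?thesis using sq1 by linarith
    qed
    define p where "p = (y + 2 * a * x) / 2"
    define q where "q = (y - 2 * a * x) / 2"
    define D where "D = (2 * x - y - 2 * a * x) / 2"
    have q0: "q > 0" using y2a q_def by simp
    have qy: "y - p = q" unfolding p_def q_def by (simp add: field_simps)
    have Dx: "x - p = D" unfolding p_def D_def by (simp add: field_simps)
    have ax: "a * x < x / 2" using a3 x0 by simp
    have D0: "D \<ge> q" unfolding D_def q_def using hyp(2) ax by simp
    have "2 * a * x > 0" using a0 x0 by simp
    then have "y - 2 * a * x < 2 * x" using hyp(2) x0 by linarith
    then have qx: "q < x" unfolding q_def by simp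
    have p0: "p \<ge> 0" unfolding p_def using y0 a0 x0 by (simp add: mult_pos_pos add_pos_pos)
    have px: "p \<le> y" using qy q0 by simp
    have LD: "L (x - p) (y - p) = 1 - q / (2 * D)"
    proof (cases "D = q")
      case True
      then show ?thesis unfolding Dx qy L_def using q0 by simp
    next
      case False
      then have "D > q" using D0 by simp
      then show ?thesis unfolding Dx qy L_def using q0 by simp
    qed
    have Lx: "L x (y - p) = 1 - q / (2 * x)" unfolding qy L_def using qx q0 by simp
    have poly: "2 * a * D * x \<le> q * p"
    proof -
      have "4 * (q * p - 2 * a * D * x) = (y + 2 * a * x)^2 - 8 * a * x^2"
        unfolding q_def p_def D_def by (simp add: field_simps power2_eq_square)
      then show ?thesis using sq2 by simp
    qed
    have Dpos: "D > 0" using D0 q0 by simp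
    have key: "\<alpha> \<le> (1 - \<alpha>) * (q / (2 * D) - q / (2 * x))"
    proof -
      have f: "q / (2 * D) - q / (2 * x) = q * p / (2 * D * x)"
        using Dpos x0 Dx by (simp add: field_simps)
      have c: "2 * D * x > 0" using Dpos x0 by simp
      have "a * (2 * D * x) \<le> q * p" using poly by (simp add: algebra_simps)
      then have "a \<le> q * p / (2 * D * x)" using pos_le_divide_eq[OF c] by simp
      then have "(1 - \<alpha>) * a \<le> (1 - \<alpha>) * (q * p / (2 * D * x))" using b by (rule mult_left_mono[OF _ less_imp_le])
      moreover have "(1 - \<alpha>) * a = \<alpha>" unfolding a_def using b by simp
      ultimately show ?thesis using f by simp
    qed
    have "\<not> A_matches \<alpha> XA XB 1 p"
    proof -
      have "uAM \<alpha> XA XB 1 p = \<alpha> + (1 - \<alpha>) * (1 - q / (2 * D))"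
        unfolding uAM_def vA_def using LD x_def y_def by simp
      moreover have "uAW \<alpha> XA XB 1 p = (1 - \<alpha>) * (1 - q / (2 * x))"
        unfolding uAW_def vA_def using Lx x_def y_def by simp
      moreover have "\<alpha> + (1 - \<alpha>) * (1 - q / (2 * D)) \<le> (1 - \<alpha>) * (1 - q / (2 * x))"
        using key by (simp add: algebra_simps)
      ultimately show ?thesis unfolding A_matches_def by simp
    qed
    then show ?thesis using p0 px y_def by auto
  qed
  then obtain p where p: "p \<in> {0..XB}" "\<not> A_matches \<alpha> XA XB 1 p" by blast
  have "uB \<alpha> XA XB 1 p \<ge> 1 - \<alpha>" using withdraw_payoff[OF A(1) A(3) _ p(2)] p(1) by simp
  then show ?thesis using piB2 p(1) by force
qed

end
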